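(* Let $\mathcal{I}\in\mathrm{Ins}(\Omega,\mathcal{H},\mathcal{K})$ be an instrument and $\mathsf{B}\in\mathcal{O}(\Lambda,\mathcal{H})$ a POVM. Then for any measure-and-prepare instrument $\mathcal{J}^{\mathsf{B}}$ that measures $\mathsf{B}$, $\mathcal{I}$ is compatible with $\mathsf{B}$ if and only if $\mathcal{I}$ is compatible with $\mathcal{J}^{\mathsf{B}}$.
   Context: All Hilbert spaces are finite-dimensional and complex, and all outcome sets are finite. A POVM $\mathsf{B}\in\mathcal{O}(\Lambda,\mathcal{H})$ is a map $y\mapsto\mathsf{B}(y)$ to positive operators with $\sum_y\mathsf{B}(y)=I$. An instrument $\mathcal{I}\in\mathrm{Ins}(\Omega,\mathcal{H},\mathcal{K})$ is a family $(\mathcal{I}_x)_{x\in\Omega}$ of completely positive trace-nonincreasing linear maps $\mathcal{L}(\mathcal{H})\to\mathcal{L}(\mathcal{K})$ whose sum is trace preserving; its induced POVM $\mathsf{A}^{\mathcal{I}}$ is given by $\mathrm{tr}[\mathsf{A}^{\mathcal{I}}(x)\varrho]=\mathrm{tr}[\mathcal{I}_x(\varrho)]$. A measure-and-prepare instrument measuring $\mathsf{B}$ is an instrument $\mathcal{J}^{\mathsf{B}}\in\mathrm{Ins}(\Lambda,\mathcal{H},\mathcal{V})$ (for some Hilbert space $\mathcal{V}$) of the form $\mathcal{J}^{\mathsf{B}}_y(\varrho)=\mathrm{tr}[\mathsf{B}(y)\varrho]\xi_y$ for some states $\{\xi_y\}_{y\in\Lambda}$ on $\mathcal{V}$. Two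 instruments $\mathcal{I}\in\mathrm{Ins}(\Omega,\mathcal{H},\mathcal{K})$, $\mathcal{J}\in\mathrm{Ins}(\Lambda,\mathcal{H},\mathcal{V})$ are compatible if there is $\mathcal{G}\in\mathrm{Ins}(\Omega\times\Lambda,\mathcal{H},\mathcal{K}\otimes\mathcal{V})$ with $\sum_{x}\mathrm{tr}_{\mathcal{K}}[\mathcal{G}_{(x,y)}(\varrho)]=\mathcal{J}_y(\varrho)$ for all $y$ and $\sum_y\mathrm{tr}_{\mathcal{V}}[\mathcal{G}_{(x,y)}(\varrho)]=\mathcal{I}_x(\varrho)$ for all $x$, for all states $\varrho$. An instrument $\mathcal{I}\in\mathrm{Ins}(\Omega,\mathcal{H},\mathcal{K})$ and a POVM $\mathsf{B}\in\mathcal{O}(\Lambda,\mathcal{H})$ are compatible if there is $\mathcal{R}\in\mathrm{Ins}(\Omega\times\Lambda,\mathcal{H},\mathcal{K})$ with $\sum_y\mathcal{R}_{(x,y)}=\mathcal{I}_x$ for all $x$ and $\sum_x\mathsf{A}^{\mathcal{R}}(x,y)=\mathsf{B}(y)$ for all $y$. *)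

theory Defs
  imports "HOL-Analysis.Analysis"
begin

text \<open>Operators on a finite-dimensional Hilbert space C^'n are matrices complex^'n^'n
  (dimension = CARD('n)). The tensor product K (x) V is modelled by the index type 'k \<times> 'v.\<close>

type_synonym 'n op = "complex^'n^'n"

definition mtrace :: "'n::finite op \<Rightarrow> complex" where
  "mtrace A = (\<Sum>i\<in>UNIV. A$i$i)"

definition cscale :: "complex \<Rightarrow> 'n::finite op \<Rightarrow> 'n op" where
  "cscale c A = (\<chi> i j. c * A$i$j)"

definition idop :: "'n::finite op" where
  "idop = mat 1"

definition pos_op :: "'n::finite op \<Rightarrow> bool" where
  "pos_op A \<longleftrightarrow> (\<forall>x::complex^'n.
      let q = (\<Sum>i\<in>UNIV. \<Sum>j\<in>UNIV. cnj (x$i) * A$i$j * x$j) in Im q = 0 \<and> Re q \<ge> 0)"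

definition is_state :: "'n::finite op \<Rightarrow> bool" where
  "is_state \<rho> \<longleftrightarrow> pos_op \<rho> \<and> mtrace \<rho> = 1"

definition is_povm :: "('y::finite \<Rightarrow> 'n::finite op) \<Rightarrow> bool" where
  "is_povm B \<longleftrightarrow> (\<forall>y. pos_op (B y)) \<and> (\<Sum>y\<in>UNIV. B y) = idop"

definition clinear_map :: "('n::finite op \<Rightarrow> 'k::finite op) \<Rightarrow> bool" where
  "clinear_map \<Phi> \<longleftrightarrow> (\<forall>A B. \<Phi> (A + B) = \<Phi> A + \<Phi> B) \<and> (\<forall>c A. \<Phi> (cscale c A) = cscale c (\<Phi> A))"

text \<open>Positivity of an m \<times> m block matrix with blocks in L(C^'n), i.e. an operator on C^m (x) C^'n.\<close>
definition block_pos :: "nat \<Rightarrow> (nat \<Rightarrow> nat \<Rightarrow> 'n::finite op) \<Rightarrow> bool" where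
  "block_pos m M \<longleftrightarrow> (\<forall>x::nat \<Rightarrow> complex^'n.
      let q = (\<Sum>a<m. \<Sum>b<m. \<Sum>i\<in>UNIV. \<Sum>j\<in>UNIV. cnj (x a $ i) * (M a b)$i$j * x b $ j)
      in Im q = 0 \<and> Re q \<ge> 0)"

text \<open>Complete positivity: id_m (x) \<Phi> is positive for every ancilla dimension m.\<close>
definition comp_pos :: "('n::finite op \<Rightarrow> 'k::finite op) \<Rightarrow> bool" where
  "comp_pos \<Phi> \<longleftrightarrow> (\<forall>m M. block_pos m M \<longrightarrow> block_pos m (\<lambda>a b. \<Phi> (M a b)))"

definition trace_nonincr :: "('n::finite op \<Rightarrow> 'k::finite op) \<Rightarrow> bool" where
  "trace_nonincr \<Phi> \<longleftrightarrow> (\<forall>\<rho>. pos_op \<rho> \<longrightarrow> Re (mtrace (\<Phi> \<rho>)) \<le> Re (mtrace \<rho>))"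

definition trace_pres :: "('n::finite op \<Rightarrow> 'k::finite op) \<Rightarrow> bool" where
  "trace_pres \<Phi> \<longleftrightarrow> (\<forall>\<rho>. mtrace (\<Phi> \<rho>) = mtrace \<rho>)"

definition is_instrument :: "('x::finite \<Rightarrow> 'n::finite op \<Rightarrow> 'k::finite op) \<Rightarrow> bool" where
  "is_instrument I \<longleftrightarrow>
     (\<forall>x. clinear_map (I x) \<and> comp_pos (I x) \<and> trace_nonincr (I x))
     \<and> trace_pres (\<lambda>\<rho>. \<Sum>x\<in>UNIV. I x \<rho>)"

definition induced_povm :: "('x::finite \<Rightarrow> 'n::finite op \<Rightarrow> 'k::finite op) \<Rightarrow> 'x \<Rightarrow> 'n op" where
  "induced_povm I x = (THE A. \<forall>\<rho>. is_state \<rho> \<longrightarrow> mtrace (A ** \<rho>) = mtrace (I x \<rho>))"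

definition meas_prep :: "('y::finite \<Rightarrow> 'n::finite op) \<Rightarrow> ('y \<Rightarrow> 'v::finite op) \<Rightarrow> 'y \<Rightarrow> 'n op \<Rightarrow> 'v op" where
  "meas_prep B \<xi> y \<rho> = cscale (mtrace (B y ** \<rho>)) (\<xi> y)"

definition ptrace_left :: "('k::finite \<times> 'v::finite) op \<Rightarrow> 'v op" where
  "ptrace_left M = (\<chi> v w. \<Sum>k\<in>UNIV. M$(k,v)$(k,w))"

definition ptrace_right :: "('k::finite \<times> 'v::finite) op \<Rightarrow> 'k op" where
  "ptrace_right M = (\<chi> k l. \<Sum>v\<in>UNIV. M$(k,v)$(l,v))"

definition compatible_ins ::
  "('x::finite \<Rightarrow> 'n::finite op \<Rightarrow> 'k::finite op) \<Rightarrow> ('y::finite \<Rightarrow> 'n op \<Rightarrow> 'v::finite op) \<Rightarrow> bool" where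
  "compatible_ins I J \<longleftrightarrow> (\<exists>G :: 'x \<times> 'y \<Rightarrow> 'n op \<Rightarrow> ('k \<times> 'v) op.
     is_instrument G \<and>
     (\<forall>\<rho>. is_state \<rho> \<longrightarrow>
        (\<forall>y. (\<Sum>x\<in>UNIV. ptrace_left (G (x,y) \<rho>)) = J y \<rho>) \<and>
        (\<forall>x. (\<Sum>y\<in>UNIV. ptrace_right (G (x,y) \<rho>)) = I x \<rho>)))"

definition compatible_ins_povm ::
  "('x::finite \<Rightarrow> 'n::finite op \<Rightarrow> 'k::finite op) \<Rightarrow> ('y::finite \<Rightarrow> 'n op) \<Rightarrow> bool" where
  "compatible_ins_povm I B \<longleftrightarrow> (\<exists>R :: 'x \<times> 'y \<Rightarrow> 'n op \<Rightarrow> 'k op.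
     is_instrument R \<and>
     (\<forall>x. (\<lambda>\<rho>. \<Sum>y\<in>UNIV. R (x,y) \<rho>) = I x) \<and>
     (\<forall>y. (\<Sum>x\<in>UNIV. induced_povm R (x,y)) = B y))"

end

theory Submission
  imports Defs
begin


definition qf :: "('n::finite \<Rightarrow> 'n \<Rightarrow> complex) \<Rightarrow> complex^'n \<Rightarrow> complex^'n \<Rightarrow> complex" where
  "qf C x y = (\<Sum>i\<in>UNIV. \<Sum>j\<in>UNIV. cnj (x$i) * C i j * y$j)"

lemma pos_op_qf: "pos_op A \<longleftrightarrow> (\<forall>x. Im (qf (\<lambda>i j. A$i$j) x x) = 0 \<and> Re (qf (\<lambda>i j. A$i$j) x x) \<ge> 0)"
  unfolding pos_op_def qf_def Let_def by simp

lemma qf_add1: "qf C (x + y) z = qf C x z + qf C y z"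
  unfolding qf_def by (simp add: algebra_simps sum.distrib)

lemma qf_add2: "qf C z (x + y) = qf C z x + qf C z y"
  unfolding qf_def by (simp add: algebra_simps sum.distrib)

lemma qf_axis1: "qf C (axis i a) y = cnj a * (\<Sum>l\<in>UNIV. C i l * y$l)"
proof -
  have "qf C (axis i a) y = (\<Sum>k\<in>UNIV. if k = i then (\<Sum>l\<in>UNIV. cnj a * C k l * y$l) else 0)"
    unfolding qf_def axis_def by (intro sum.cong refl) simp
  also have "\<dots> = cnj a * (\<Sum>l\<in>UNIV. C i l * y$l)" by (simp add: sum_distrib_left mult.assoc)
  finally show ?thesis .
qed

lemma qf_axis: "qf C (axis i a) (axis j b) = cnj a * C i j * b"
proof -
  have "(\<Sum>l\<in>UNIV. C i l * axis j b $ l) = (\<Sum>l\<in>UNIV. if l = j then C i l * b else 0)"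
    unfolding axis_def by (intro sum.cong refl) simp
  also have "\<dots> = C i j * b" by simp
  finally show ?thesis by (simp add: qf_axis1 mult.assoc)
qed

lemma qf_two: "qf C (axis i a + axis j b) (axis i a + axis j b) =
   cnj a * C i i * a + cnj a * C i j * b + cnj b * C j i * a + cnj b * C j j * b"
  by (simp add: qf_add1 qf_add2 qf_axis)

lemma polarization:
  assumes "\<forall>x. qf C x x = 0"
  shows "C i j = 0"
proof -
  have f: "cnj a * C i i * a + cnj a * C i j * b + cnj b * C j i * a + cnj b * C j j * b = 0" for a b
    using assms qf_two[of C i a j b] by simp
  have 1: "C i i = 0" using f[of 1 0] by simp
  have 2: "C j j = 0" using f[of 0 1] by simp
  have 3: "C i j + C j i = 0" using f[of 1 1] 1 2 by simp
  have 4: "\<i> * C i j - \<i> * C j i = 0" using f[of 1 \<i>] 1 2 by (simp add: algebra_simps)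
  from 3 4 show ?thesis by (simp add: algebra_simps)
qed

lemma pos_hermitian:
  assumes "pos_op A"
  shows "A$j$i = cnj (A$i$j)"
proof -
  let ?C = "\<lambda>i j. A$i$j"
  have f: "Im (cnj a * A$i$i * a + cnj a * A$i$j * b + cnj b * A$j$i * a + cnj b * A$j$j * b) = 0" for a b
  proof -
    have "Im (qf ?C (axis i a + axis j b) (axis i a + axis j b)) = 0" using assms unfolding pos_op_qf by blast
    then show ?thesis by (simp only: qf_two)
  qed
  have 1: "Im (A$i$i) = 0" using f[of 1 0] by simp
  have 2: "Im (A$j$j) = 0" using f[of 0 1] by simp
  have 3: "Im (A$i$j) + Im (A$j$i) = 0" using f[of 1 1] 1 2 by simp
  have e: "cnj 1 * A$i$i * 1 + cnj 1 * A$i$j * \<i> + cnj \<i> * A$j$i * 1 + cnj \<i> * A$j$j * \<i>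
     = A$i$i + \<i> * A$i$j - \<i> * A$j$i + A$j$j" by (simp add: algebra_simps)
  have 4: "Re (A$i$j) - Re (A$j$i) = 0" using f[of 1 \<i>] 1 2 unfolding e by simp
  have "Im (A$j$i) = - Im (A$i$j)" "Re (A$j$i) = Re (A$i$j)" using 3 4 by linarith+
  then show ?thesis by (simp add: complex_eq_iff)
qed



lemma qf_axis2: "qf C x (axis j b) = (\<Sum>k\<in>UNIV. cnj (x$k) * C k j) * b"
proof -
  have "qf C x (axis j b) = (\<Sum>k\<in>UNIV. \<Sum>l\<in>UNIV. if l = j then cnj (x$k) * C k l * b else 0)"
    unfolding qf_def axis_def by (intro sum.cong refl) simp
  also have "\<dots> = (\<Sum>k\<in>UNIV. cnj (x$k) * C k j) * b" by (simp add: sum_distrib_right)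
  finally show ?thesis .
qed

lemma qf_diff: "qf (\<lambda>i j. C i j - D i j) x y = qf C x y - qf D x y"
  unfolding qf_def by (simp add: algebra_simps sum_subtractf)

lemma qf_rank1: "qf (\<lambda>i j. u$i * cnj (u$j)) x y = (\<Sum>i\<in>UNIV. cnj (x$i) * u$i) * (\<Sum>j\<in>UNIV. cnj (u$j) * y$j)"
  unfolding qf_def by (simp add: sum_product algebra_simps)

lemma pos_diag_real:
  assumes "pos_op A"
  shows "A$d$d = of_real (Re (A$d$d))" "Re (A$d$d) \<ge> 0"
proof -
  have "A$d$d = cnj (A$d$d)" using pos_hermitian[OF assms] by metis
  then show "A$d$d = of_real (Re (A$d$d))" by (metis Reals_cnj_iff complex_is_Real_iff of_real_Re)
  have "Re (qf (\<lambda>i j. A$i$j) (axis d 1) (axis d 1)) \<ge> 0" using assms unfolding pos_op_qf by blast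
  then show "Re (A$d$d) \<ge> 0" by (simp add: qf_axis)
qed

lemma pos_zero_diag:
  assumes "pos_op A" "A$d$d = 0"
  shows "A$v$d = 0"
proof (rule ccontr)
  let ?C = "\<lambda>i j. A$i$j"
  define c where "c = A$v$d"
  assume "A$v$d \<noteq> 0"
  then have c0: "c \<noteq> 0" by (simp add: c_def)
  have h: "A$d$v = cnj c" using pos_hermitian[OF assms(1)] c_def by metis
  define s where "s = (Re (A$v$v) + 1) / (2 * (cmod c)^2)"
  define t where "t = - of_real s * cnj c"
  have "Re (qf ?C (axis d t + axis v 1) (axis d t + axis v 1)) \<ge> 0" using assms(1) unfolding pos_op_qf by blast
  then have ge: "Re (cnj t * cnj c + c * t + A$v$v) \<ge> 0"
    by (simp add: qf_two assms(2) h c_def[symmetric] algebra_simps)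
  have cc: "c * cnj c = of_real ((cmod c)^2)" by (metis complex_norm_square)
  have "cnj t * cnj c + c * t = - 2 * of_real s * (c * cnj c)"
    by (simp add: t_def algebra_simps)
  also have "\<dots> = - of_real (2 * s * (cmod c)^2)" by (simp add: cc)
  also have "2 * s * (cmod c)^2 = Re (A$v$v) + 1" using c0 by (simp add: s_def)
  finally have "Re (cnj t * cnj c + c * t + A$v$v) = -1" by simp
  with ge show False by simp
qed

lemma psd_decomp_aux:
  fixes A :: "'n::finite op"
  assumes "finite D"
  shows "pos_op A \<Longrightarrow> (\<forall>i j. i \<notin> D \<or> j \<notin> D \<longrightarrow> A$i$j = 0) \<Longrightarrow>
    \<exists>U::'n \<Rightarrow> complex^'n. \<forall>i j. A$i$j = (\<Sum>r\<in>D. U r $ i * cnj (U r $ j))"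
  using assms
proof (induction D arbitrary: A rule: finite_induct)
  case empty
  then show ?case by auto
next
  case (insert d D)
  let ?C = "\<lambda>i j. A$i$j"
  define c where "c = Re (A$d$d)"
  have Add: "A$d$d = of_real c" and cge: "c \<ge> 0" using pos_diag_real[OF insert.prems(1)] c_def by auto
  have herm: "\<And>i j. A$j$i = cnj (A$i$j)" using pos_hermitian[OF insert.prems(1)] by metis
  define u where "u = (\<chi> v. A$v$d / of_real (sqrt c) :: complex^'n)"
  define A' where "A' = (\<chi> i j. A$i$j - u$i * cnj (u$j) :: 'n op)"
  have posA': "pos_op A'"
  proof (cases "c = 0")
    case True
    then have "u = 0" by (simp add: u_def vec_eq_iff)
    then have "A' = A" by (simp add: A'_def vec_eq_iff)
    then show ?thesis using insert.prems(1) by simp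
  next
    case False
    then have cpos: "c > 0" using cge by simp
    show ?thesis unfolding pos_op_qf
    proof
      fix x :: "complex^'n"
      define s where "s = (\<Sum>j\<in>UNIV. A$d$j * x$j)"
      define t where "t = - s / of_real c"
      have s1: "(\<Sum>k\<in>UNIV. cnj (x$k) * A$k$d) = cnj s"
        unfolding s_def by (simp add: herm[of d] mult.commute)
      have s2: "(\<Sum>i\<in>UNIV. cnj (x$i) * u$i) = cnj s / of_real (sqrt c)"
        unfolding u_def using s1 by (simp add: sum_divide_distrib[symmetric] mult.commute)
      have s3: "(\<Sum>j\<in>UNIV. cnj (u$j) * x$j) = s / of_real (sqrt c)"
        unfolding u_def s_def by (simp add: herm[of d] sum_divide_distrib[symmetric] mult.commute)
      have "qf (\<lambda>i j. A'$i$j) x x = qf ?C x x - cnj s * s / of_real c"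
      proof -
        have "qf (\<lambda>i j. A'$i$j) x x = qf ?C x x - qf (\<lambda>i j. u$i * cnj (u$j)) x x"
          unfolding A'_def by (simp add: qf_diff)
        also have "qf (\<lambda>i j. u$i * cnj (u$j)) x x = cnj s * s / of_real c"
        proof -
          have sq: "(complex_of_real (sqrt c))^2 = of_real c" using cpos by (simp flip: of_real_power)
          show ?thesis using cpos by (simp add: qf_rank1 s2 s3 power2_eq_square[symmetric] sq)
        qed
        finally show ?thesis .
      qed
      also have "\<dots> = qf ?C (x + axis d t) (x + axis d t)"
      proof -
        have "qf ?C (x + axis d t) (x + axis d t) = qf ?C x x + cnj s * t + cnj t * s + cnj t * of_real c * t"
        proof -
          have "qf ?C (x + axis d t) (x + axis d t) = qf ?C x x + qf ?C x (axis d t) + qf ?C (axis d t) x + qf ?C (axis d t) (axis d t)"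
            by (simp add: qf_add1 qf_add2)
          also have "qf ?C x (axis d t) = cnj s * t" by (simp only: qf_axis2 s1)
          also have "qf ?C (axis d t) x = cnj t * s" by (simp add: qf_axis1 s_def)
          also have "qf ?C (axis d t) (axis d t) = cnj t * of_real c * t" by (simp add: qf_axis Add)
          finally show ?thesis .
        qed
        moreover have "cnj s * t + cnj t * s + cnj t * of_real c * t = - (cnj s * s / of_real c)"
          unfolding t_def using cpos by (simp add: field_simps power2_eq_square)
        ultimately have "qf ?C (x + axis d t) (x + axis d t) = qf ?C x x + (- (cnj s * s / of_real c))"
          by (simp only: add.assoc)
        then show ?thesis by simp
      qed
      finally have e: "qf (\<lambda>i j. A'$i$j) x x = qf ?C (x + axis d t) (x + axis d t)" .
      show "Im (qf (\<lambda>i j. A'$i$j) x x) = 0 \<and> 0 \<le> Re (qf (\<lambda>i j. A'$i$j) x x)"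
        unfolding e using insert.prems(1) unfolding pos_op_qf by blast
    qed
  qed
  have supp: "\<forall>i j. i \<notin> D \<or> j \<notin> D \<longrightarrow> A'$i$j = 0"
  proof (intro allI impI)
    fix i j assume ij: "i \<notin> D \<or> j \<notin> D"
    have zero_out: "A$i$j = 0" if "i \<notin> insert d D \<or> j \<notin> insert d D" for i j
      using insert.prems(2) that by blast
    have u_out: "u$i = 0" if "i \<notin> insert d D" for i
      using zero_out[of i d] that by (simp add: u_def)
    show "A'$i$j = 0"
    proof (cases "c = 0")
      case True
      then have "u = 0" by (simp add: u_def vec_eq_iff)
      have "A$i$j = 0"
      proof (cases "i = d \<or> j = d")
        case True
        have dd: "A$d$d = 0" using Add \<open>c = 0\<close> by simp
        have z1: "A$k$d = 0" for k using pos_zero_diag[OF insert.prems(1) dd] .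
        have z2: "A$d$k = 0" for k using z1[of k] herm[of k d] by simp
        show ?thesis using True z1 z2 by auto
      next
        case False
        then show ?thesis using ij zero_out by blast
      qed
      then show ?thesis using \<open>u = 0\<close> by (simp add: A'_def)
    next
      case False
      then have cpos: "c > 0" using cge by simp
      have cs: "c / sqrt c = sqrt c" using cpos by (simp add: real_div_sqrt)
      have ud: "u$d = of_real (sqrt c)"
      proof -
        have "u$d = of_real c / of_real (sqrt c)" by (simp add: u_def Add)
        also have "\<dots> = of_real (c / sqrt c)" by simp
        finally show ?thesis using cs by simp
      qed
      have cu: "cnj (u$j) = A$d$j / of_real (sqrt c)" for j
        unfolding u_def herm[of d j] by simp
      have cu': "u$i = A$i$d / of_real (sqrt c)" for i
        by (simp add: u_def)
      consider "i = d" | "j = d" | "i \<notin> insert d D" | "j \<notin> insert d D" using ij by blast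
      then show ?thesis
      proof cases
        case 1
        then show ?thesis using cpos by (simp add: A'_def ud cu)
      next
        case 2
        have "cnj (u$d) = of_real (sqrt c)" using ud by simp
        then have "u$i * cnj (u$d) = A$i$d" using cpos by (simp add: cu'[of i])
        then show ?thesis using 2 by (simp add: A'_def)
      next
        case 3
        then show ?thesis using zero_out u_out by (simp add: A'_def)
      next
        case 4
        then show ?thesis using zero_out u_out by (simp add: A'_def)
      qed
    qed
  qed
  obtain U where U: "\<forall>i j. A'$i$j = (\<Sum>r\<in>D. U r $ i * cnj (U r $ j))"
    using insert.IH[OF posA' supp] by blast
  define U' where "U' = U(d := u)"
  have "A$i$j = (\<Sum>r\<in>insert d D. U' r $ i * cnj (U' r $ j))" for i j
  proof -
    have "(\<Sum>r\<in>D. U' r $ i * cnj (U' r $ j)) = (\<Sum>r\<in>D. U r $ i * cnj (U r $ j))"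
      using insert.hyps(2) by (intro sum.cong refl) (auto simp: U'_def)
    then have "(\<Sum>r\<in>insert d D. U' r $ i * cnj (U' r $ j)) = u$i * cnj (u$j) + A'$i$j"
      using insert.hyps U by (simp add: U'_def)
    then show ?thesis by (simp add: A'_def)
  qed
  then show ?case by blast
qed

lemma psd_decomp:
  fixes A :: "'n::finite op"
  assumes "pos_op A"
  shows "\<exists>U::'n \<Rightarrow> complex^'n. \<forall>i j. A$i$j = (\<Sum>r\<in>UNIV. U r $ i * cnj (U r $ j))"
  using psd_decomp_aux[of UNIV A] assms by simp



definition qb :: "nat \<Rightarrow> (nat \<Rightarrow> nat \<Rightarrow> 'n::finite op) \<Rightarrow> (nat \<Rightarrow> complex^'n) \<Rightarrow> complex" where
  "qb m M x = (\<Sum>a<m. \<Sum>b<m. \<Sum>i\<in>UNIV. \<Sum>j\<in>UNIV. cnj (x a $ i) * (M a b)$i$j * x b $ j)"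

lemma block_pos_qb: "block_pos m M \<longleftrightarrow> (\<forall>x. Im (qb m M x) = 0 \<and> Re (qb m M x) \<ge> 0)"
  unfolding block_pos_def qb_def Let_def by simp

lemma qb_add: "qb m (\<lambda>a b. M1 a b + M2 a b) x = qb m M1 x + qb m M2 x"
  unfolding qb_def by (simp add: algebra_simps sum.distrib)

lemma qb_zero: "qb m (\<lambda>a b. 0) x = 0"
  unfolding qb_def by simp

lemma block_pos_add: "block_pos m M1 \<Longrightarrow> block_pos m M2 \<Longrightarrow> block_pos m (\<lambda>a b. M1 a b + M2 a b)"
  unfolding block_pos_qb qb_add by simp

lemma block_pos_sum:
  assumes "finite S" "\<And>s. s \<in> S \<Longrightarrow> block_pos m (\<lambda>a b. F s a b)"
  shows "block_pos m (\<lambda>a b. \<Sum>s\<in>S. F s a b)"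
  using assms
proof (induction S rule: finite_induct)
  case empty
  then show ?case unfolding block_pos_qb by (simp add: qb_zero)
next
  case (insert t S)
  have "(\<lambda>a b. \<Sum>s\<in>insert t S. F s a b) = (\<lambda>a b. F t a b + (\<Sum>s\<in>S. F s a b))"
    using insert.hyps by simp
  have h1: "block_pos m (\<lambda>a b. F t a b)" using insert.prems[of t] by blast
  have h2: "block_pos m (\<lambda>a b. \<Sum>s\<in>S. F s a b)" using insert.IH insert.prems by blast
  show ?case unfolding \<open>(\<lambda>a b. \<Sum>s\<in>insert t S. F s a b) = _\<close> using block_pos_add[OF h1 h2] .
qed

lemma sum_pair_univ: "(\<Sum>p\<in>(UNIV::('a::finite \<times> 'b::finite) set). f p) = (\<Sum>k\<in>UNIV. \<Sum>v\<in>UNIV. f (k, v))"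
proof -
  have "(\<Sum>k\<in>UNIV. \<Sum>v\<in>UNIV. f (k, v)) = (\<Sum>(k,v)\<in>UNIV \<times> UNIV. f (k, v))"
    by (rule sum.cartesian_product)
  then show ?thesis by simp
qed



definition tensor :: "'k::finite op \<Rightarrow> 'v::finite op \<Rightarrow> ('k \<times> 'v) op" where
  "tensor N X = (\<chi> p q. N$fst p$fst q * X$snd p$snd q)"

definition rank1 :: "complex^'v::finite \<Rightarrow> 'v op" where
  "rank1 u = (\<chi> v w. u$v * cnj (u$w))"

lemma cp_tensor_rank1:
  fixes N :: "nat \<Rightarrow> nat \<Rightarrow> 'k::finite op" and u :: "complex^'v::finite"
  assumes "block_pos m N"
  shows "block_pos m (\<lambda>a b. tensor (N a b) (rank1 u))"
  unfolding block_pos_qb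
proof
  fix x :: "nat \<Rightarrow> complex^('k \<times> 'v)"
  define z where "z = (\<lambda>a. (\<chi> k. \<Sum>v\<in>UNIV. cnj (u$v) * x a $ (k, v)) :: complex^'k)"
  have e: "qb m (\<lambda>a b. tensor (N a b) (rank1 u)) x = qb m N z"
  proof -
    have inner: "(\<Sum>p\<in>UNIV. \<Sum>q\<in>UNIV. cnj (x a $ p) * (tensor (N a b) (rank1 u))$p$q * x b $ q)
      = (\<Sum>k\<in>UNIV. \<Sum>l\<in>UNIV. cnj (z a $ k) * N a b $ k $ l * z b $ l)" for a b
    proof -
      have "(\<Sum>p\<in>UNIV. \<Sum>q\<in>UNIV. cnj (x a $ p) * (tensor (N a b) (rank1 u))$p$q * x b $ q)
        = (\<Sum>k\<in>UNIV. \<Sum>v\<in>UNIV. \<Sum>l\<in>UNIV. \<Sum>w\<in>UNIV.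
             cnj (x a $ (k,v)) * (N a b $ k $ l * (u$v * cnj (u$w))) * x b $ (l,w))"
        by (simp add: sum_pair_univ tensor_def rank1_def)
      also have "\<dots> = (\<Sum>k\<in>UNIV. \<Sum>l\<in>UNIV. \<Sum>v\<in>UNIV. \<Sum>w\<in>UNIV.
             cnj (x a $ (k,v)) * (N a b $ k $ l * (u$v * cnj (u$w))) * x b $ (l,w))"
        by (intro sum.cong refl) (rule sum.swap)
      also have "\<dots> = (\<Sum>k\<in>UNIV. \<Sum>l\<in>UNIV. cnj (z a $ k) * N a b $ k $ l * z b $ l)"
      proof (intro sum.cong refl)
        fix k l
        have cz: "cnj (z a $ k) = (\<Sum>v\<in>UNIV. u$v * cnj (x a $ (k,v)))" unfolding z_def by simp
        have zb: "z b $ l = (\<Sum>w\<in>UNIV. cnj (u$w) * x b $ (l,w))" unfolding z_def by simp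
        show "(\<Sum>v\<in>UNIV. \<Sum>w\<in>UNIV. cnj (x a $ (k,v)) * (N a b $ k $ l * (u$v * cnj (u$w))) * x b $ (l,w))
           = cnj (z a $ k) * N a b $ k $ l * z b $ l"
        proof -
          have "cnj (z a $ k) * N a b $ k $ l * z b $ l = (\<Sum>v\<in>UNIV. u$v * cnj (x a $ (k,v)) * N a b $ k $ l) * (\<Sum>w\<in>UNIV. cnj (u$w) * x b $ (l,w))"
            unfolding cz zb by (simp add: sum_distrib_right)
          also have "\<dots> = (\<Sum>v\<in>UNIV. \<Sum>w\<in>UNIV. (u$v * cnj (x a $ (k,v)) * N a b $ k $ l) * (cnj (u$w) * x b $ (l,w)))"
            by (rule sum_product)
          finally show ?thesis by (simp add: mult_ac)
        qed
      qed
      finally show ?thesis .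
    qed
    show ?thesis unfolding qb_def inner ..
  qed
  show "Im (qb m (\<lambda>a b. tensor (N a b) (rank1 u)) x) = 0 \<and> 0 \<le> Re (qb m (\<lambda>a b. tensor (N a b) (rank1 u)) x)"
    unfolding e using assms unfolding block_pos_qb by blast
qed

lemma tensor_sum2: "finite S \<Longrightarrow> tensor N (\<Sum>r\<in>S. X r) = (\<Sum>r\<in>S. tensor N (X r))"
  by (induction S rule: finite_induct) (simp_all add: tensor_def vec_eq_iff algebra_simps)

lemma cp_tensor:
  fixes N :: "nat \<Rightarrow> nat \<Rightarrow> 'k::finite op" and X :: "'v::finite op"
  assumes "block_pos m N" "pos_op X"
  shows "block_pos m (\<lambda>a b. tensor (N a b) X)"
proof -
  obtain U :: "'v \<Rightarrow> complex^'v" where U: "\<forall>i j. X$i$j = (\<Sum>r\<in>UNIV. U r $ i * cnj (U r $ j))"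
    using psd_decomp[OF assms(2)] by blast
  have "X = (\<Sum>r\<in>UNIV. rank1 (U r))"
    using U by (simp add: vec_eq_iff rank1_def sum_component)
  then have "(\<lambda>a b. tensor (N a b) X) = (\<lambda>a b. \<Sum>r\<in>UNIV. tensor (N a b) (rank1 (U r)))"
    by (simp add: tensor_sum2)
  moreover have "block_pos m (\<lambda>a b. \<Sum>r\<in>UNIV. tensor (N a b) (rank1 (U r)))"
    by (rule block_pos_sum) (simp_all add: cp_tensor_rank1[OF assms(1)])
  ultimately show ?thesis by simp
qed

definition pslice :: "'v \<Rightarrow> ('k::finite \<times> 'v::finite) op \<Rightarrow> 'k op" where
  "pslice v M = (\<chi> k l. M$(k,v)$(l,v))"

lemma sum_pair_delta: "(\<Sum>p\<in>(UNIV::('a::finite \<times> 'b::finite) set). if snd p = v then g p else 0) = (\<Sum>k\<in>UNIV. g (k, v))"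
  by (simp add: sum_pair_univ)

lemma cp_pslice:
  fixes N :: "nat \<Rightarrow> nat \<Rightarrow> ('k::finite \<times> 'v::finite) op"
  assumes "block_pos m N"
  shows "block_pos m (\<lambda>a b. pslice v (N a b))"
  unfolding block_pos_qb
proof
  fix x :: "nat \<Rightarrow> complex^'k"
  define y where "y = (\<lambda>a. (\<chi> p. if snd p = v then x a $ fst p else 0) :: complex^('k \<times> 'v))"
  have inner: "(\<Sum>p\<in>UNIV. \<Sum>q\<in>UNIV. cnj (y a $ p) * N a b $ p $ q * y b $ q)
      = (\<Sum>k\<in>UNIV. \<Sum>l\<in>UNIV. cnj (x a $ k) * (pslice v (N a b)) $ k $ l * x b $ l)" for a b
  proof -
    have "(\<Sum>p\<in>UNIV. \<Sum>q\<in>UNIV. cnj (y a $ p) * N a b $ p $ q * y b $ q)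
       = (\<Sum>p\<in>UNIV. if snd p = v then (\<Sum>q\<in>UNIV. if snd q = v then cnj (x a $ fst p) * N a b $ (fst p, v) $ (fst q, v) * x b $ fst q else 0) else 0)"
    proof (intro sum.cong refl)
      fix p :: "'k \<times> 'v"
      show "(\<Sum>q\<in>UNIV. cnj (y a $ p) * N a b $ p $ q * y b $ q) = (if snd p = v then (\<Sum>q\<in>UNIV. if snd q = v then cnj (x a $ fst p) * N a b $ (fst p, v) $ (fst q, v) * x b $ fst q else 0) else 0)"
      proof (cases "snd p = v")
        case True
        have "cnj (y a $ p) * N a b $ p $ q * y b $ q = (if snd q = v then cnj (x a $ fst p) * N a b $ (fst p, v) $ (fst q, v) * x b $ fst q else 0)" for q
          using True by (cases q; cases p) (simp add: y_def)
        then show ?thesis using True by simp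
      next
        case False
        then show ?thesis by (simp add: y_def)
      qed
    qed
    also have "\<dots> = (\<Sum>k\<in>UNIV. \<Sum>l\<in>UNIV. cnj (x a $ k) * (pslice v (N a b)) $ k $ l * x b $ l)"
      by (simp add: sum_pair_delta pslice_def)
    finally show ?thesis .
  qed
  have e: "qb m (\<lambda>a b. pslice v (N a b)) x = qb m N y"
    unfolding qb_def inner ..
  show "Im (qb m (\<lambda>a b. pslice v (N a b)) x) = 0 \<and> 0 \<le> Re (qb m (\<lambda>a b. pslice v (N a b)) x)"
    unfolding e using assms unfolding block_pos_qb by blast
qed

lemma ptrace_right_pslice: "ptrace_right M = (\<Sum>v\<in>UNIV. pslice v M)"
  by (simp add: ptrace_right_def pslice_def vec_eq_iff sum_component)

lemma cp_ptrace_right: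
  fixes N :: "nat \<Rightarrow> nat \<Rightarrow> ('k::finite \<times> 'v::finite) op"
  assumes "block_pos m N"
  shows "block_pos m (\<lambda>a b. ptrace_right (N a b))"
  unfolding ptrace_right_pslice
  by (rule block_pos_sum) (simp_all add: cp_pslice[OF assms])



lemma clin_add: "clinear_map F \<Longrightarrow> F (A + B) = F A + F B"
  unfolding clinear_map_def by blast

lemma clin_cscale: "clinear_map F \<Longrightarrow> F (cscale c A) = cscale c (F A)"
  unfolding clinear_map_def by blast

lemma clin_zero: "clinear_map F \<Longrightarrow> F 0 = 0"
  using clin_add[of F 0 0] by simp

lemma clin_sum: "clinear_map F \<Longrightarrow> F (\<Sum>s\<in>S. f s) = (\<Sum>s\<in>S. F (f s))"
proof (induction S rule: infinite_finite_induct)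
  case (infinite A)
  then show ?case by (simp add: clin_zero)
next
  case empty
  then show ?case by (simp add: clin_zero)
next
  case (insert x F)
  then show ?case by (simp add: clin_add)
qed

definition E :: "'n::finite \<Rightarrow> 'n \<Rightarrow> 'n op" where
  "E i j = (\<chi> a b. if a = i \<and> b = j then 1 else 0)"

lemma cscale_component: "(cscale c A)$i$j = c * A$i$j"
  by (simp add: cscale_def)

lemma mat_expand: "A = (\<Sum>i\<in>UNIV. \<Sum>j\<in>UNIV. cscale (A$i$j) (E i j))"
proof -
  have "(\<Sum>i\<in>UNIV. \<Sum>j\<in>UNIV. cscale (A$i$j) (E i j))$a$b = A$a$b" for a b
  proof -
    have "(\<Sum>i\<in>UNIV. \<Sum>j\<in>UNIV. cscale (A$i$j) (E i j))$a$b = (\<Sum>i\<in>UNIV. \<Sum>j\<in>UNIV. (cscale (A$i$j) (E i j))$a$b)"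
      by simp
    also have "\<dots> = (\<Sum>i\<in>UNIV. \<Sum>j\<in>UNIV. if i = a \<and> j = b then A$i$j else 0)"
      by (intro sum.cong refl) (auto simp: cscale_component E_def)
    also have "\<dots> = (\<Sum>i\<in>UNIV. if i = a then (\<Sum>j\<in>UNIV. if j = b then A$i$j else 0) else 0)"
      by (intro sum.cong refl) auto
    also have "\<dots> = A$a$b" by simp
    finally show ?thesis .
  qed
  then show ?thesis by (simp add: vec_eq_iff)
qed

lemma clin_expand_component:
  assumes "clinear_map F"
  shows "(F (\<Sum>i\<in>UNIV. \<Sum>j\<in>UNIV. cscale (c i j) (E i j)))$p$q = (\<Sum>i\<in>UNIV. \<Sum>j\<in>UNIV. c i j * (F (E i j))$p$q)"
  by (simp add: clin_sum[OF assms] clin_cscale[OF assms] cscale_component)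

lemma mtrace_add: "mtrace (A + B) = mtrace A + mtrace B"
  unfolding mtrace_def by (simp add: sum.distrib)

lemma mtrace_zero: "mtrace 0 = 0"
  unfolding mtrace_def by simp

lemma mtrace_sum: "mtrace (\<Sum>s\<in>S. f s) = (\<Sum>s\<in>S. mtrace (f s))"
  by (induction S rule: infinite_finite_induct) (simp_all add: mtrace_zero mtrace_add)

lemma mtrace_cscale: "mtrace (cscale c A) = c * mtrace A"
  unfolding mtrace_def by (simp add: cscale_component sum_distrib_left)

lemma mtrace_mult_rank1: "mtrace (A ** rank1 x) = qf (\<lambda>i j. A$i$j) x x"
  unfolding mtrace_def qf_def rank1_def matrix_matrix_mult_def
  by (simp add: sum_distrib_left mult_ac)

lemma mult_cscale: "A ** cscale c B = cscale c (A ** B)"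
  unfolding cscale_def matrix_matrix_mult_def by (simp add: vec_eq_iff sum_distrib_left mult_ac)

definition nrm :: "complex^'n::finite \<Rightarrow> real" where
  "nrm x = (\<Sum>i\<in>UNIV. (cmod (x$i))^2)"

lemma nrm_pos: "x \<noteq> 0 \<Longrightarrow> nrm x > 0"
proof -
  assume "x \<noteq> 0"
  then obtain i where "x$i \<noteq> 0" by (auto simp: vec_eq_iff)
  then have "(cmod (x$i))^2 > 0" by simp
  moreover have "(cmod (x$i))^2 \<le> nrm x" unfolding nrm_def
    by (rule member_le_sum) auto
  ultimately show ?thesis by linarith
qed



definition state_of :: "complex^'n::finite \<Rightarrow> 'n op" where
  "state_of x = cscale (of_real (1 / nrm x)) (rank1 x)"

lemma qf_rank1_self: "qf (\<lambda>i j. (rank1 x)$i$j) y y = of_real ((cmod (\<Sum>i\<in>UNIV. cnj (y$i) * x$i))^2)"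
proof -
  define s where "s = (\<Sum>i\<in>UNIV. cnj (y$i) * x$i)"
  have c: "(\<Sum>j\<in>UNIV. cnj (x$j) * y$j) = cnj s" unfolding s_def by (simp add: mult.commute)
  have "qf (\<lambda>i j. (rank1 x)$i$j) y y = s * cnj s"
    unfolding rank1_def using qf_rank1[of x y y] c s_def by simp
  also have "\<dots> = of_real ((cmod s)^2)" by (metis complex_norm_square)
  finally show ?thesis unfolding s_def .
qed

lemma qf_cscale: "qf (\<lambda>i j. (cscale c A)$i$j) x y = c * qf (\<lambda>i j. A$i$j) x y"
  unfolding qf_def by (simp add: cscale_component sum_distrib_left mult_ac)

lemma state_of_state:
  assumes "x \<noteq> 0"
  shows "is_state (state_of x)"
proof -
  have np: "nrm x > 0" using nrm_pos[OF assms] .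
  have pos: "pos_op (state_of x)" unfolding pos_op_qf state_of_def qf_cscale qf_rank1_self
    using np by (simp del: of_real_power add: of_real_mult[symmetric])
  have "mtrace (rank1 x) = of_real (nrm x)"
  proof -
    have "mtrace (rank1 x) = (\<Sum>i\<in>UNIV. x$i * cnj (x$i))" unfolding mtrace_def rank1_def by simp
    also have "\<dots> = (\<Sum>i\<in>UNIV. of_real ((cmod (x$i))^2))"
      by (intro sum.cong refl) (metis complex_norm_square)
    also have "\<dots> = of_real (nrm x)" unfolding nrm_def by simp
    finally show ?thesis .
  qed
  then have "mtrace (state_of x) = 1" unfolding state_of_def mtrace_cscale using np
    by (simp flip: of_real_mult)
  then show ?thesis using pos unfolding is_state_def by simp
qed

lemma rank1_state_of: "x \<noteq> 0 \<Longrightarrow> rank1 x = cscale (of_real (nrm x)) (state_of x)"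
  using nrm_pos[of x] unfolding state_of_def cscale_def by (simp add: vec_eq_iff)

lemma rank1_zero: "rank1 0 = 0"
  unfolding rank1_def by (simp add: vec_eq_iff)


lemma tr_unique:
  fixes A B :: "'n::finite op"
  assumes "\<forall>\<rho>. is_state \<rho> \<longrightarrow> mtrace (A ** \<rho>) = mtrace (B ** \<rho>)"
  shows "A = B"
proof -
  have q: "qf (\<lambda>i j. A$i$j) x x = qf (\<lambda>i j. B$i$j) x x" for x
  proof (cases "x = 0")
    case True
    then show ?thesis by (simp add: qf_def)
  next
    case False
    have "mtrace (A ** rank1 x) = mtrace (B ** rank1 x)"
      unfolding rank1_state_of[OF False] mult_cscale mtrace_cscale
      using assms state_of_state[OF False] by simp
    then show ?thesis by (simp add: mtrace_mult_rank1)
  qed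
  have "\<forall>x. qf (\<lambda>i j. A$i$j - B$i$j) x x = 0" by (simp add: qf_diff q)
  then have "A$i$j - B$i$j = 0" for i j by (rule polarization)
  then show ?thesis by (simp add: vec_eq_iff)
qed

lemma tr_exists:
  fixes F :: "'n::finite op \<Rightarrow> 'k::finite op"
  assumes "clinear_map F"
  shows "\<exists>A. \<forall>\<rho>. mtrace (A ** \<rho>) = mtrace (F \<rho>)"
proof -
  define A where "A = (\<chi> j i. mtrace (F (E i j)) :: 'n op)"
  have "mtrace (A ** \<rho>) = mtrace (F \<rho>)" for \<rho>
  proof -
    have "mtrace (F \<rho>) = mtrace (F (\<Sum>i\<in>UNIV. \<Sum>j\<in>UNIV. cscale (\<rho>$i$j) (E i j)))"
      by (subst mat_expand[of \<rho>]) (rule refl)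
    also have "\<dots> = (\<Sum>i\<in>UNIV. \<Sum>j\<in>UNIV. \<rho>$i$j * mtrace (F (E i j)))"
      by (simp add: clin_sum[OF assms] clin_cscale[OF assms] mtrace_sum mtrace_cscale)
    also have "\<dots> = (\<Sum>j\<in>UNIV. \<Sum>i\<in>UNIV. \<rho>$i$j * mtrace (F (E i j)))"
      by (rule sum.swap)
    also have "\<dots> = mtrace (A ** \<rho>)"
      unfolding mtrace_def A_def matrix_matrix_mult_def by (simp add: mult.commute)
    finally show ?thesis by simp
  qed
  then show ?thesis by blast
qed

lemma induced_char:
  assumes "clinear_map (R x)"
  shows "is_state \<rho> \<Longrightarrow> mtrace (induced_povm R x ** \<rho>) = mtrace (R x \<rho>)"
proof -
  let ?P = "\<lambda>A. \<forall>\<rho>. is_state \<rho> \<longrightarrow> mtrace (A ** \<rho>) = mtrace (R x \<rho>)"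
  obtain A where A: "\<forall>\<rho>. mtrace (A ** \<rho>) = mtrace (R x \<rho>)" using tr_exists[OF assms] by blast
  have ex: "?P A" using A by simp
  have un: "\<And>B. ?P B \<Longrightarrow> B = A" using ex by (intro tr_unique) simp
  have "?P (THE A. ?P A)" by (rule theI[of ?P A, OF ex un])
  then have "?P (induced_povm R x)" unfolding induced_povm_def .
  then show "is_state \<rho> \<Longrightarrow> mtrace (induced_povm R x ** \<rho>) = mtrace (R x \<rho>)" by blast
qed


lemma lin_unique:
  fixes F G :: "'n::finite op \<Rightarrow> 'k::finite op"
  assumes F: "clinear_map F" and G: "clinear_map G"
    and st: "\<forall>\<rho>. is_state \<rho> \<longrightarrow> F \<rho> = G \<rho>"
  shows "F = G"
proof -
  have r1: "F (rank1 x) = G (rank1 x)" for x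
  proof (cases "x = 0")
    case True
    then show ?thesis by (simp add: rank1_zero clin_zero F G)
  next
    case False
    then show ?thesis unfolding rank1_state_of[OF False] clin_cscale[OF F] clin_cscale[OF G]
      using st state_of_state[OF False] by simp
  qed
  have rexp: "rank1 x = (\<Sum>i\<in>UNIV. \<Sum>j\<in>UNIV. cscale (x$i * cnj (x$j)) (E i j))" for x :: "complex^'n"
  proof -
    have "rank1 x = (\<Sum>i\<in>UNIV. \<Sum>j\<in>UNIV. cscale ((rank1 x)$i$j) (E i j))" by (rule mat_expand)
    also have "\<dots> = (\<Sum>i\<in>UNIV. \<Sum>j\<in>UNIV. cscale (x$i * cnj (x$j)) (E i j))" by (simp add: rank1_def)
    finally show ?thesis .
  qed
  have EE: "(F (E i j))$p$q = (G (E i j))$p$q" for i j p q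
  proof -
    define C where "C = (\<lambda>i j. (F (E i j))$p$q - (G (E i j))$p$q)"
    have "qf C y y = 0" for y
    proof -
      define x where "x = (\<chi> i. cnj (y$i) :: complex^'n)"
      have "(F (rank1 x))$p$q = (G (rank1 x))$p$q" using r1 by simp
      then have "(\<Sum>i\<in>UNIV. \<Sum>j\<in>UNIV. (x$i * cnj (x$j)) * (F (E i j))$p$q) = (\<Sum>i\<in>UNIV. \<Sum>j\<in>UNIV. (x$i * cnj (x$j)) * (G (E i j))$p$q)"
        unfolding rexp clin_expand_component[OF F] clin_expand_component[OF G] .
      then have "(\<Sum>i\<in>UNIV. \<Sum>j\<in>UNIV. (x$i * cnj (x$j)) * C i j) = 0"
        unfolding C_def by (simp add: algebra_simps sum_subtractf)
      then show ?thesis unfolding qf_def x_def by (simp add: mult_ac)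
    qed
    then have "C i j = 0" by (intro polarization) simp
    then show ?thesis unfolding C_def by simp
  qed
  show ?thesis
  proof
    fix M :: "'n op"
    have eq: "(\<Sum>i\<in>UNIV. \<Sum>j\<in>UNIV. cscale (M$i$j) (E i j)) = M" by (rule mat_expand[symmetric])
    have "(F M)$p$q = (G M)$p$q" for p q
      using clin_expand_component[OF F, of "\<lambda>i j. M$i$j"] clin_expand_component[OF G, of "\<lambda>i j. M$i$j"] EE
      unfolding eq by simp
    then show "F M = G M" by (simp add: vec_eq_iff)
  qed
qed



lemma cscale_one: "cscale 1 A = A"
  by (simp add: cscale_def vec_eq_iff)

lemma cscale_sum_left: "(\<Sum>s\<in>S. cscale (f s) X) = cscale (\<Sum>s\<in>S. f s) X"
  by (simp add: cscale_def vec_eq_iff sum_distrib_right)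

lemma tensor_add1: "tensor (A + B) X = tensor A X + tensor B X"
  by (simp add: tensor_def vec_eq_iff algebra_simps)

lemma tensor_cscale1: "tensor (cscale c A) X = cscale c (tensor A X)"
  by (simp add: tensor_def cscale_def vec_eq_iff algebra_simps)

lemma clinear_tensor: "clinear_map F \<Longrightarrow> clinear_map (\<lambda>\<rho>. tensor (F \<rho>) X)"
  unfolding clinear_map_def by (simp add: tensor_add1 tensor_cscale1)

lemma ptrace_right_add: "ptrace_right (A + B) = ptrace_right A + ptrace_right B"
  by (simp add: ptrace_right_def vec_eq_iff sum.distrib)

lemma ptrace_right_cscale: "ptrace_right (cscale c A) = cscale c (ptrace_right A)"
  by (simp add: ptrace_right_def cscale_def vec_eq_iff sum_distrib_left)

lemma clinear_ptrace: "clinear_map F \<Longrightarrow> clinear_map (\<lambda>\<rho>. ptrace_right (F \<rho>))"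
  unfolding clinear_map_def by (simp add: ptrace_right_add ptrace_right_cscale)

lemma cscale_add2: "cscale c (A + B) = cscale c A + cscale c B"
  by (simp add: cscale_def vec_eq_iff algebra_simps)

lemma cscale_sum2: "cscale c (\<Sum>s\<in>S. f s) = (\<Sum>s\<in>S. cscale c (f s))"
  by (simp add: cscale_def vec_eq_iff sum_distrib_left)

lemma clinear_sum: "(\<And>s. s \<in> S \<Longrightarrow> clinear_map (F s)) \<Longrightarrow> clinear_map (\<lambda>\<rho>. \<Sum>s\<in>S. F s \<rho>)"
  unfolding clinear_map_def by (simp add: sum.distrib cscale_sum2)

lemma mtrace_tensor: "mtrace (tensor A X) = mtrace A * mtrace X"
  unfolding mtrace_def tensor_def by (simp add: sum_pair_univ sum_product)

lemma ptrace_left_tensor: "ptrace_left (tensor A X) = cscale (mtrace A) X"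
  unfolding ptrace_left_def tensor_def cscale_def mtrace_def by (simp add: vec_eq_iff sum_distrib_right)

lemma ptrace_right_tensor: "ptrace_right (tensor A X) = cscale (mtrace X) A"
  unfolding ptrace_right_def tensor_def cscale_def mtrace_def by (simp add: vec_eq_iff sum_distrib_left mult.commute)

lemma mtrace_ptrace_right: "mtrace (ptrace_right M) = mtrace M"
  unfolding mtrace_def ptrace_right_def by (simp add: sum_pair_univ)

lemma mtrace_ptrace_left: "mtrace (ptrace_left M) = mtrace M"
  unfolding mtrace_def ptrace_left_def by (simp add: sum_pair_univ) (rule sum.swap)

lemma matrix_add_rdistrib': "(A + B) ** C = A ** C + B ** (C :: 'n::finite op)"
  by (simp add: matrix_matrix_mult_def vec_eq_iff algebra_simps sum.distrib)

lemma mult_sum_left: "(\<Sum>s\<in>S. A s) ** \<rho> = (\<Sum>s\<in>S. A s ** (\<rho> :: 'n::finite op))"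
  by (induction S rule: infinite_finite_induct) (simp_all add: matrix_add_rdistrib')



lemma forward:
  fixes I :: "'x::finite \<Rightarrow> complex^'n::finite^'n \<Rightarrow> complex^'k::finite^'k"
    and B :: "'y::finite \<Rightarrow> complex^'n^'n"
    and \<xi> :: "'y \<Rightarrow> complex^'v::finite^'v"
  assumes st: "\<forall>y. is_state (\<xi> y)"
    and c: "compatible_ins_povm I B"
  shows "compatible_ins I (meas_prep B \<xi>)"
proof -
  obtain R :: "'x \<times> 'y \<Rightarrow> 'n op \<Rightarrow> 'k op" where Rins: "is_instrument R"
    and Rm: "\<forall>x. (\<lambda>\<rho>. \<Sum>y\<in>UNIV. R (x,y) \<rho>) = I x"
    and RB: "\<forall>y. (\<Sum>x\<in>UNIV. induced_povm R (x,y)) = B y"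
    using c unfolding compatible_ins_povm_def by blast
  have Rall: "\<forall>p. clinear_map (R p) \<and> comp_pos (R p) \<and> trace_nonincr (R p)"
    using Rins unfolding is_instrument_def by blast
  have Rlin: "clinear_map (R p)" and Rcp: "comp_pos (R p)" and Rtn: "trace_nonincr (R p)" for p
    using Rall by blast+
  have Rtp: "mtrace (\<Sum>p\<in>UNIV. R p \<rho>) = mtrace \<rho>" for \<rho>
    using Rins unfolding is_instrument_def trace_pres_def by blast
  have trx: "mtrace (\<xi> y) = 1" and posx: "pos_op (\<xi> y)" for y
    using st unfolding is_state_def by auto
  define G where "G = (\<lambda>p \<rho>. tensor (R p \<rho>) (\<xi> (snd p)))"
  have trG: "mtrace (G p \<rho>) = mtrace (R p \<rho>)" for p \<rho>
    by (simp add: G_def mtrace_tensor trx)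
  have Gins: "is_instrument G"
    unfolding is_instrument_def
  proof (intro conjI allI)
    fix p :: "'x \<times> 'y"
    show "clinear_map (G p)" unfolding G_def by (rule clinear_tensor[OF Rlin])
    show "comp_pos (G p)" unfolding comp_pos_def
    proof (intro allI impI)
      fix m and M :: "nat \<Rightarrow> nat \<Rightarrow> 'n op"
      assume "block_pos m M"
      then have "block_pos m (\<lambda>a b. R p (M a b))" using Rcp[of p] unfolding comp_pos_def by blast
      then show "block_pos m (\<lambda>a b. G p (M a b))" unfolding G_def by (rule cp_tensor[OF _ posx])
    qed
    show "trace_nonincr (G p)" using Rtn[of p] unfolding trace_nonincr_def trG .
  next
    show "trace_pres (\<lambda>\<rho>. \<Sum>p\<in>UNIV. G p \<rho>)"
      unfolding trace_pres_def
    proof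
      fix \<rho> :: "'n op"
      have "mtrace (\<Sum>p\<in>UNIV. G p \<rho>) = (\<Sum>p\<in>UNIV. mtrace (R p \<rho>))" by (simp add: mtrace_sum trG)
      also have "\<dots> = mtrace (\<Sum>p\<in>UNIV. R p \<rho>)" by (simp add: mtrace_sum)
      finally show "mtrace (\<Sum>p\<in>UNIV. G p \<rho>) = mtrace \<rho>" using Rtp[of \<rho>] by simp
    qed
  qed
  have m1: "(\<Sum>x\<in>UNIV. ptrace_left (G (x,y) \<rho>)) = meas_prep B \<xi> y \<rho>" if "is_state \<rho>" for y \<rho>
  proof -
    have "(\<Sum>x\<in>UNIV. ptrace_left (G (x,y) \<rho>)) = cscale (\<Sum>x\<in>UNIV. mtrace (R (x,y) \<rho>)) (\<xi> y)"
      by (simp add: G_def ptrace_left_tensor cscale_sum_left)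
    also have "(\<Sum>x\<in>UNIV. mtrace (R (x,y) \<rho>)) = mtrace (B y ** \<rho>)"
    proof -
      have "mtrace (B y ** \<rho>) = mtrace ((\<Sum>x\<in>UNIV. induced_povm R (x,y)) ** \<rho>)" using RB by simp
      also have "\<dots> = (\<Sum>x\<in>UNIV. mtrace (induced_povm R (x,y) ** \<rho>))" by (simp add: mult_sum_left mtrace_sum)
      also have "\<dots> = (\<Sum>x\<in>UNIV. mtrace (R (x,y) \<rho>))" by (intro sum.cong refl) (rule induced_char[where R=R, OF Rlin that])
      finally show ?thesis by simp
    qed
    finally show ?thesis by (simp add: meas_prep_def)
  qed
  have m2: "(\<Sum>y\<in>UNIV. ptrace_right (G (x,y) \<rho>)) = I x \<rho>" for x \<rho>
  proof -
    have "(\<Sum>y\<in>UNIV. ptrace_right (G (x,y) \<rho>)) = (\<Sum>y\<in>UNIV. R (x,y) \<rho>)"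
      by (simp add: G_def ptrace_right_tensor trx cscale_one)
    also have "\<dots> = I x \<rho>" using fun_cong[OF spec[OF Rm, of x], of \<rho>] by simp
    finally show ?thesis .
  qed
  show ?thesis unfolding compatible_ins_def
    using Gins m1 m2 by blast
qed

lemma backward:
  fixes I :: "'x::finite \<Rightarrow> complex^'n::finite^'n \<Rightarrow> complex^'k::finite^'k"
    and B :: "'y::finite \<Rightarrow> complex^'n^'n"
    and \<xi> :: "'y \<Rightarrow> complex^'v::finite^'v"
  assumes Iins: "is_instrument I"
    and st: "\<forall>y. is_state (\<xi> y)"
    and c: "compatible_ins I (meas_prep B \<xi>)"
  shows "compatible_ins_povm I B"
proof -
  obtain G :: "'x \<times> 'y \<Rightarrow> 'n op \<Rightarrow> ('k \<times> 'v) op" where Gins: "is_instrument G"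
    and mar: "\<forall>\<rho>. is_state \<rho> \<longrightarrow>
        (\<forall>y. (\<Sum>x\<in>UNIV. ptrace_left (G (x,y) \<rho>)) = meas_prep B \<xi> y \<rho>) \<and>
        (\<forall>x. (\<Sum>y\<in>UNIV. ptrace_right (G (x,y) \<rho>)) = I x \<rho>)"
    using c unfolding compatible_ins_def by blast
  have Gall: "\<forall>p. clinear_map (G p) \<and> comp_pos (G p) \<and> trace_nonincr (G p)"
    using Gins unfolding is_instrument_def by blast
  have Glin: "clinear_map (G p)" and Gcp: "comp_pos (G p)" and Gtn: "trace_nonincr (G p)" for p
    using Gall by blast+
  have Gtp: "mtrace (\<Sum>p\<in>UNIV. G p \<rho>) = mtrace \<rho>" for \<rho>
    using Gins unfolding is_instrument_def trace_pres_def by blast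
  have Ilin: "clinear_map (I x)" for x using Iins unfolding is_instrument_def by auto
  have trx: "mtrace (\<xi> y) = 1" for y
    using st unfolding is_state_def by auto
  define R where "R = (\<lambda>p \<rho>. ptrace_right (G p \<rho>))"
  have Rlin: "clinear_map (R p)" for p unfolding R_def by (rule clinear_ptrace[OF Glin])
  have trR: "mtrace (R p \<rho>) = mtrace (G p \<rho>)" for p \<rho>
    by (simp add: R_def mtrace_ptrace_right)
  have Rins: "is_instrument R"
    unfolding is_instrument_def
  proof (intro conjI allI)
    fix p :: "'x \<times> 'y"
    show "clinear_map (R p)" by (rule Rlin)
    show "comp_pos (R p)" unfolding comp_pos_def
    proof (intro allI impI)
      fix m and M :: "nat \<Rightarrow> nat \<Rightarrow> 'n op"
      assume "block_pos m M"
      then have "block_pos m (\<lambda>a b. G p (M a b))" using Gcp[of p] unfolding comp_pos_def by blast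
      then show "block_pos m (\<lambda>a b. R p (M a b))" unfolding R_def by (rule cp_ptrace_right)
    qed
    show "trace_nonincr (R p)" using Gtn[of p] unfolding trace_nonincr_def trR .
  next
    show "trace_pres (\<lambda>\<rho>. \<Sum>p\<in>UNIV. R p \<rho>)"
      unfolding trace_pres_def
    proof
      fix \<rho> :: "'n op"
      have "mtrace (\<Sum>p\<in>UNIV. R p \<rho>) = (\<Sum>p\<in>UNIV. mtrace (G p \<rho>))" by (simp add: mtrace_sum trR)
      also have "\<dots> = mtrace (\<Sum>p\<in>UNIV. G p \<rho>)" by (simp add: mtrace_sum)
      finally show "mtrace (\<Sum>p\<in>UNIV. R p \<rho>) = mtrace \<rho>" using Gtp[of \<rho>] by simp
    qed
  qed
  have m1: "(\<lambda>\<rho>. \<Sum>y\<in>UNIV. R (x,y) \<rho>) = I x" for x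
  proof (rule lin_unique)
    show "clinear_map (\<lambda>\<rho>. \<Sum>y\<in>UNIV. R (x,y) \<rho>)" by (rule clinear_sum) (rule Rlin)
    show "clinear_map (I x)" by (rule Ilin)
    show "\<forall>\<rho>. is_state \<rho> \<longrightarrow> (\<Sum>y\<in>UNIV. R (x,y) \<rho>) = I x \<rho>"
      using mar unfolding R_def by blast
  qed
  have m2: "(\<Sum>x\<in>UNIV. induced_povm R (x,y)) = B y" for y
  proof (rule tr_unique, intro allI impI)
    fix \<rho> :: "'n op"
    assume s: "is_state \<rho>"
    have "mtrace ((\<Sum>x\<in>UNIV. induced_povm R (x,y)) ** \<rho>) = (\<Sum>x\<in>UNIV. mtrace (induced_povm R (x,y) ** \<rho>))"
      by (simp add: mult_sum_left mtrace_sum)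
    also have "\<dots> = (\<Sum>x\<in>UNIV. mtrace (R (x,y) \<rho>))" by (intro sum.cong refl) (rule induced_char[where R=R, OF Rlin s])
    also have "\<dots> = (\<Sum>x\<in>UNIV. mtrace (ptrace_left (G (x,y) \<rho>)))" by (simp add: trR mtrace_ptrace_left)
    also have "\<dots> = mtrace (\<Sum>x\<in>UNIV. ptrace_left (G (x,y) \<rho>))" by (simp add: mtrace_sum)
    also have "\<dots> = mtrace (meas_prep B \<xi> y \<rho>)" using mar s by simp
    also have "\<dots> = mtrace (B y ** \<rho>)" by (simp add: meas_prep_def mtrace_cscale trx)
    finally show "mtrace ((\<Sum>x\<in>UNIV. induced_povm R (x,y)) ** \<rho>) = mtrace (B y ** \<rho>)" .
  qed
  show ?thesis unfolding compatible_ins_povm_def using Rins m1 m2 by blast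
qed

theorem proposition8:
  fixes I :: "'x::finite \<Rightarrow> complex^'n::finite^'n \<Rightarrow> complex^'k::finite^'k"
    and B :: "'y::finite \<Rightarrow> complex^'n^'n"
    and \<xi> :: "'y \<Rightarrow> complex^'v::finite^'v"
  assumes "is_instrument I"
    and "is_povm B"
    and "\<forall>y. is_state (\<xi> y)"
  shows "compatible_ins_povm I B \<longleftrightarrow> compatible_ins I (meas_prep B \<xi>)"
  using forward[OF assms(3)] backward[OF assms(1) assms(3)] by blast

end
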